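(* For an integer $k\ge 1$ let $\ell(k)=s+1$, where $s\ge 0$ is the exponent of $2$ in the prime factorization of $k$ (so $k/2^s$ is odd), and let $r_k=\sum_{i=1}^k \ell(i)$ (so $r_1=1$ and $r_k=r_{k-1}+\ell(k)$). Then for every integer $m\ge 1$ the set $\{r_n: n\in\mathbb{N},\ \ell(n)=m\}$ has strictly positive lower density in $\mathbb{N}$, i.e. $\liminf_{N\to\infty}\frac{1}{N}\,\bigl|\{r_n: \ell(n)=m\}\cap\{1,\dots,N\}\bigr|>0$. *)

theory Defs
  imports "HOL-Analysis.Analysis" "HOL-Computational_Algebra.Primes"
begin

definition ell :: "nat \<Rightarrow> nat" where
  "ell k = multiplicity (2::nat) k + 1"

definition r :: "nat \<Rightarrow> nat" where
  "r k = (\<Sum>i=1..k. ell i)"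

definition Rset :: "nat \<Rightarrow> nat set" where
  "Rset m = {r n | n. n \<ge> 1 \<and> ell n = m}"

end

theory Submission
  imports Defs
begin

definition S :: "nat \<Rightarrow> nat" where
  "S k = (\<Sum>i=1..k. multiplicity (2::nat) i)"

lemma mult_odd: "multiplicity (2::nat) (2*n+1) = 0"
  by (rule not_dvd_imp_multiplicity_0) presburger

lemma mult_even: "multiplicity (2::nat) (2*n) = (if n = 0 then 0 else Suc (multiplicity 2 n))"
  using multiplicity_times_same[where p="2::nat" and x=n] by (cases "n=0") auto

lemma mult_odd': "multiplicity (2::nat) (Suc (2*n)) = 0"
  using mult_odd[of n] by simp

lemma S_Suc: "S (Suc k) = S k + multiplicity 2 (Suc k)"
  unfolding S_def by simp

lemma S_double: "S (2*n) = S n + n"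
proof (induction n)
  case 0 then show ?case by (simp add: S_def)
next
  case (Suc n)
  have "S (2*Suc n) = S (Suc (Suc (2*n)))" by simp
  also have "\<dots> = S (2*n) + multiplicity 2 (2*n+1) + multiplicity 2 (2*Suc n)"
    by (simp only: S_Suc) (simp add: add.commute)
  also have "\<dots> = S n + n + Suc (multiplicity 2 (Suc n))"
    using Suc by (simp only: mult_odd mult_even) simp
  also have "\<dots> = S (Suc n) + Suc n" by (simp add: S_Suc)
  finally show ?case .
qed

lemma S_le: "S n \<le> n"
proof (induction n rule: less_induct)
  case (less n)
  show ?case
  proof (cases "even n")
    case True
    then obtain k where k: "n = 2*k" by blast
    show ?thesis
    proof (cases "k = 0")
      case True then show ?thesis using k by (simp add: S_def)
    next
      case False
      then have "S k \<le> k" using less k by simp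
      then show ?thesis using k S_double by simp
    qed
  next
    case False
    then obtain k where k: "n = Suc (2*k)" by (metis oddE add.commute plus_1_eq_Suc)
    show ?thesis
    proof (cases "k = 0")
      case True then show ?thesis using k by (simp add: S_def)
    next
      case False
      then have "S k \<le> k" using less k by simp
      then show ?thesis using k S_double S_Suc[of "2*k"] mult_odd[of k] by simp
    qed
  qed
qed

lemma r_eq: "r n = n + S n"
  unfolding r_def S_def ell_def sum.distrib by simp

lemma r_le: "r n \<le> 2*n" using r_eq S_le by (simp add: mult_2)

lemma r_ge: "n \<le> r n" using r_eq by simp

lemma r_strict: "strict_mono r"
proof (rule strict_monoI_Suc)
  fix n show "r n < r (Suc n)" unfolding r_def ell_def by simp
qed

lemma ell_val:
  assumes "m \<ge> 1" shows "ell (2^(m-1)*(2*j+1)) = m"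
proof -
  have "multiplicity (2::nat) (2^(m-1)*(2*j+1)) = multiplicity 2 ((2::nat)^(m-1)) + multiplicity 2 (2*j+1)"
    by (rule prime_elem_multiplicity_mult_distrib) auto
  also have "\<dots> = m - 1" by (simp add: multiplicity_same_power mult_odd')
  finally show ?thesis using assms unfolding ell_def by simp
qed

lemma card_bound:
  assumes "m \<ge> 1"
  shows "N div 2^(m+1) \<le> card (Rset m \<inter> {1..N})"
proof -
  define J where "J = N div 2^(m+1)"
  define f where "f j = r (2^(m-1)*(2*j+1))" for j
  have sm: "strict_mono f"
    unfolding f_def
    by (rule strict_monoI, rule strict_monoD[OF r_strict]) simp
  have "f ` {..<J} \<subseteq> Rset m \<inter> {1..N}"
  proof
    fix x assume "x \<in> f ` {..<J}"
    then obtain j where j: "j < J" "x = f j" by auto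
    let ?n = "2^(m-1)*(2*j+1) :: nat"
    have "?n > 0" by simp
    then have n1: "?n \<ge> 1" by linarith
    have "x \<in> Rset m" unfolding Rset_def using j n1 ell_val[OF assms] f_def by blast
    moreover have "x \<ge> 1" using r_ge[of ?n] n1 j f_def by simp
    moreover have "x \<le> N"
    proof -
      have "x \<le> 2 * ?n" using r_le[of ?n] j(2) f_def by simp
      also have "2 * ?n = 2^m * (2*j+1)"
      proof -
        have "2*(2::nat)^(m-1) = 2^m" using assms by (cases m) auto
        then show ?thesis by (metis mult.assoc)
      qed
      also have "\<dots> \<le> 2^m * (2*J)" 
      proof -
        have "2*j+1 \<le> 2*J" using j(1) by simp
        then show ?thesis by (rule mult_le_mono2)
      qed
      also have "\<dots> = 2^(m+1) * J" by simp
      also have "\<dots> \<le> N" unfolding J_def by simp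
      finally show ?thesis .
    qed
    ultimately show "x \<in> Rset m \<inter> {1..N}" by simp
  qed
  then have "card (f ` {..<J}) \<le> card (Rset m \<inter> {1..N})"
    by (intro card_mono) auto
  moreover have "card (f ` {..<J}) = J"
    using card_image[OF strict_mono_imp_inj_on[OF sm]] by simp
  ultimately show ?thesis unfolding J_def by simp
qed

lemma aux_distr: "(q::nat) * (a + 1) = q*a + q" by simp

theorem lemma3p4:
  fixes m :: nat
  assumes "m \<ge> 1"
  shows "liminf (\<lambda>N::nat. ereal (real (card (Rset m \<inter> {1..N})) / real N)) > 0"
proof -
  define c :: real where "c = 1 / 2^(m+2)"
  have cpos: "c > 0" unfolding c_def by simp
  have ev: "\<forall>\<^sub>F N in sequentially. ereal c \<le> ereal (real (card (Rset m \<inter> {1..N})) / real N)"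
  proof (rule eventually_sequentiallyI[of "2^(m+2)"])
    fix N :: nat assume N: "2^(m+2) \<le> N"
    let ?q = "(2::nat)^(m+1)"
    have "(0::nat) < 2^(m+2)" by simp
    then have "0 < N" using N by linarith
    then have Npos: "real N > 0" by simp
    have e1: "?q * (N div ?q) + N mod ?q = N" by simp
    have e2: "N mod ?q < ?q" by simp
    have e3: "?q * (N div ?q + 1) = ?q * (N div ?q) + ?q" by (rule aux_distr)
    have "N < ?q * (N div ?q + 1)" unfolding e3 using e1 e2 by linarith
    then have "real N < real (?q * (N div ?q + 1))" by (simp only: of_nat_less_iff)
    then have "real N < real ?q * (real (N div ?q) + 1)" by (simp only: of_nat_mult of_nat_add of_nat_1)
    then have h1: "real N / real ?q - 1 < real (N div ?q)"
      by (simp add: field_simps)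
    have h2: "real (N div ?q) \<le> real (card (Rset m \<inter> {1..N}))"
      using card_bound[OF assms, of N] by simp
    have h3: "c * real N = real N / real ?q - real N / (2 * real ?q)"
      unfolding c_def by (simp add: field_simps)
    have h4: "real N / (2 * real ?q) \<ge> 1"
    proof -
      have "real (2^(m+2)) \<le> real N" using N by (simp only: of_nat_le_iff)
      then show ?thesis by (simp add: field_simps)
    qed
    have "c * real N \<le> real (card (Rset m \<inter> {1..N}))" using h1 h2 h3 h4 by linarith
    then show "ereal c \<le> ereal (real (card (Rset m \<inter> {1..N})) / real N)"
      using Npos by (simp add: field_simps)
  qed
  have "ereal c \<le> liminf (\<lambda>N::nat. ereal (real (card (Rset m \<inter> {1..N})) / real N))"
    by (rule Liminf_bounded[OF ev])
  moreover have "0 < ereal c" using cpos by simp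
  ultimately show ?thesis by (rule less_le_trans[rotated])
qed

end
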